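(* Let $\beta,\delta,K,\mu>0$ and set $s^*=\mu/\delta$. Define $$a=2\beta,\qquad b=3\beta s^*-K\beta,\qquad c=2\beta s^{*2}+2K\delta-2K\beta s^*,\qquad d=4K\delta s^*,$$ and $$\Delta=b^2c^2-4ac^3-4b^3d-27a^2d^2+18abcd.$$ If $\Delta<0$, then the cubic equation $am^3+bm^2+cm+d=0$ has no positive root $m$.
   Context: This cubic determines the male component $m^*$ of a possible interior equilibrium, with female component $f^*>0$, of the system $$f'=\tfrac12 fm\beta L-\delta f,\qquad m'=\big(\tfrac12 fm+fs\big)\beta L-\delta m,\qquad s'=\mu-\delta s,\qquad L=1-\frac{f+m+s}{K}.$$ *)

theory Defs
  imports Complex_Main
begin

end

theory Submission
  imports Defs
begin

lemma cubic_disc: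
  fixes a b c d m :: real
  assumes a: "a > 0" and d: "d > 0" and m: "m > 0"
    and r: "a * m^3 + b * m^2 + c * m + d = 0"
  shows "b^2 * c^2 - 4 * a * c^3 - 4 * b^3 * d - 27 * a^2 * d^2 + 18 * a * b * c * d \<ge> 0"
proof -
  define B where "B = b + a * m"
  define C where "C = c + b * m + a * m^2"
  have dC: "d = - m * C" using r unfolding C_def by algebra
  have "C < 0"
  proof (rule ccontr)
    assume "\<not> C < 0"
    then have "m * C \<ge> 0" using m by simp
    then show False using d dC by linarith
  qed
  then have q: "B^2 - 4 * a * C \<ge> 0" using a
    by (smt (verit) mult_pos_neg zero_le_power2)
  have bB: "b = B - a * m" and cC: "c = C - b * m - a * m^2" unfolding B_def C_def by simp_all
  have "b^2 * c^2 - 4 * a * c^3 - 4 * b^3 * d - 27 * a^2 * d^2 + 18 * a * b * c * d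
      = (a * m^2 + B * m + C)^2 * (B^2 - 4 * a * C)"
    unfolding dC cC bB by algebra
  then show ?thesis using q by simp
qed

theorem mainTheorem18:
  fixes \<beta> \<delta> K \<mu> :: real
  assumes "\<beta> > 0" and "\<delta> > 0" and "K > 0" and "\<mu> > 0"
  shows "let s = \<mu> / \<delta>;
             a = 2 * \<beta>;
             b = 3 * \<beta> * s - K * \<beta>;
             c = 2 * \<beta> * s^2 + 2 * K * \<delta> - 2 * K * \<beta> * s;
             d = 4 * K * \<delta> * s;
             \<Delta> = b^2 * c^2 - 4 * a * c^3 - 4 * b^3 * d - 27 * a^2 * d^2 + 18 * a * b * c * d
         in \<Delta> < 0 \<longrightarrow> \<not> (\<exists>m::real. m > 0 \<and> a * m^3 + b * m^2 + c * m + d = 0)"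
proof -
  have s: "\<mu> / \<delta> > 0" using assms by simp
  have d: "4 * K * \<delta> * (\<mu> / \<delta>) > 0" using assms s by simp
  show ?thesis unfolding Let_def
    using cubic_disc[of "2 * \<beta>" "4 * K * \<delta> * (\<mu> / \<delta>)"] assms d
    by (smt (verit))
qed

end
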